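(* Let $\mathrm{G}$ be a non-commutative Lie group belonging to the class $\mathcal{C}$, with Lie algebra $\mathfrak{g}$, and let $\mu$ be a left-invariant pseudo-Riemannian metric on $\mathrm{G}$. Then $\mu$ is flat if and only if the restriction of the inner product $\mu(e)$ to the derived ideal $[\mathfrak{g},\mathfrak{g}]$ is degenerate.
   Context: The class $\mathcal{C}$ consists of the non-commutative Lie groups $\mathrm{G}$ whose Lie algebra $\mathfrak{g}$ satisfies: for all $x,y\in\mathfrak{g}$, the bracket $[x,y]$ is a linear combination of $x$ and $y$. A metric is flat if its Riemann curvature tensor vanishes identically. *)

theory Defs
  imports "HOL-Analysis.Analysis"
begin

definition lie_algebra :: "('a::euclidean_space \<Rightarrow> 'a \<Rightarrow> 'a) \<Rightarrow> bool" where
  "lie_algebra br \<longleftrightarrow> bilinear br \<and> (\<forall>x. br x x = 0) \<and>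
     (\<forall>x y z. br x (br y z) + br y (br z x) + br z (br x y) = 0)"

definition class_C :: "('a::euclidean_space \<Rightarrow> 'a \<Rightarrow> 'a) \<Rightarrow> bool" where
  "class_C br \<longleftrightarrow> (\<exists>x y. br x y \<noteq> 0) \<and>
     (\<forall>x y. \<exists>a b::real. br x y = a *\<^sub>R x + b *\<^sub>R y)"

text \<open>A pseudo-Riemannian inner product (= left-invariant pseudo-Riemannian metric,
identified with its value at the identity): symmetric, bilinear, nondegenerate,
arbitrary signature.\<close>
definition pseudo_inner :: "('a::euclidean_space \<Rightarrow> 'a \<Rightarrow> real) \<Rightarrow> bool" where
  "pseudo_inner g \<longleftrightarrow> bilinear g \<and> (\<forall>u v. g u v = g v u) \<and>
     (\<forall>u. (\<forall>v. g u v = 0) \<longrightarrow> u = 0)"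

text \<open>Levi-Civita connection of the left-invariant metric, restricted to
left-invariant vector fields: bilinear, torsion-free and metric.\<close>
definition levi_civita ::
  "('a::euclidean_space \<Rightarrow> 'a \<Rightarrow> real) \<Rightarrow> ('a \<Rightarrow> 'a \<Rightarrow> 'a) \<Rightarrow> ('a \<Rightarrow> 'a \<Rightarrow> 'a) \<Rightarrow> bool" where
  "levi_civita g br nabla \<longleftrightarrow> bilinear nabla \<and>
     (\<forall>x y. nabla x y - nabla y x = br x y) \<and>
     (\<forall>x y z. g (nabla x y) z + g y (nabla x z) = 0)"

definition curvature ::
  "('a::real_vector \<Rightarrow> 'a \<Rightarrow> 'a) \<Rightarrow> ('a \<Rightarrow> 'a \<Rightarrow> 'a) \<Rightarrow> 'a \<Rightarrow> 'a \<Rightarrow> 'a \<Rightarrow> 'a" where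
  "curvature br nabla x y z = nabla x (nabla y z) - nabla y (nabla x z) - nabla (br x y) z"

text \<open>The left-invariant metric is flat iff the curvature of its Levi-Civita
connection vanishes identically (on left-invariant fields, which suffices).\<close>
definition flat :: "('a::euclidean_space \<Rightarrow> 'a \<Rightarrow> real) \<Rightarrow> ('a \<Rightarrow> 'a \<Rightarrow> 'a) \<Rightarrow> bool" where
  "flat g br \<longleftrightarrow> (\<exists>nabla. levi_civita g br nabla \<and>
     (\<forall>x y z. curvature br nabla x y z = 0))"

definition derived_ideal :: "('a::euclidean_space \<Rightarrow> 'a \<Rightarrow> 'a) \<Rightarrow> 'a set" where
  "derived_ideal br = span {br x y | x y. True}"

definition degenerate_on :: "('a::euclidean_space \<Rightarrow> 'a \<Rightarrow> real) \<Rightarrow> 'a set \<Rightarrow> bool" where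
  "degenerate_on g W \<longleftrightarrow> (\<exists>u\<in>W. u \<noteq> 0 \<and> (\<forall>v\<in>W. g u v = 0))"

end

theory Submission imports Defs begin

lemma eigen_scalar:
  fixes f :: "'a::real_vector \<Rightarrow> 'a"
  assumes lf: "linear f" and W: "subspace W" and ev: "\<forall>w\<in>W. \<exists>k. f w = k *\<^sub>R w"
  shows "\<exists>c. \<forall>w\<in>W. f w = c *\<^sub>R w"
proof (cases "\<exists>w0\<in>W. w0 \<noteq> 0")
  case False
  then show ?thesis using linear_0[OF lf] by (intro exI[of _ 0]) auto
next
  case True
  then obtain w0 where w0: "w0 \<in> W" "w0 \<noteq> 0" by blast
  obtain c where c: "f w0 = c *\<^sub>R w0" using ev w0 by blast
  show ?thesis
  proof (intro exI ballI)
    fix w assume w: "w \<in> W"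
    obtain kw where kw: "f w = kw *\<^sub>R w" using ev w by blast
    have "w + w0 \<in> W" using W w w0 by (simp add: subspace_add)
    then obtain k where k: "f (w + w0) = k *\<^sub>R (w + w0)" using ev by blast
    have "f (w + w0) = kw *\<^sub>R w + c *\<^sub>R w0" using kw c linear_add[OF lf] by simp
    then have eq: "(k - kw) *\<^sub>R w = (c - k) *\<^sub>R w0" using k by (simp add: algebra_simps)
    show "f w = c *\<^sub>R w"
    proof (cases "k = kw")
      case True
      then have "(c - k) *\<^sub>R w0 = 0" using eq by simp
      then have "c = k" using w0 by simp
      then show ?thesis using kw True by simp
    next
      case False
      then have "w = ((c - k) / (k - kw)) *\<^sub>R w0"
        using eq by (metis (no_types, lifting) divide_inverse_commute eq_vector_fraction_iff right_minus_eq scaleR_scaleR)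
      then show ?thesis using c linear_scale[OF lf] by (simp add: scaleR_scaleR mult.commute)
    qed
  qed
qed

lemma ad_form:
  fixes br :: "'a::euclidean_space \<Rightarrow> 'a \<Rightarrow> 'a"
  assumes la: "lie_algebra br" and cc: "\<forall>x y. \<exists>a b::real. br x y = a *\<^sub>R x + b *\<^sub>R y"
    and x: "x \<noteq> 0"
  shows "\<exists>c. \<forall>y. \<exists>m. br x y = c *\<^sub>R y + m *\<^sub>R x"
proof -
  have bl: "bilinear br" and alt: "\<And>x. br x x = 0" using la unfolding lie_algebra_def by blast+
  have xx: "x \<bullet> x \<noteq> 0" using x by simp
  define P where "P y = y - ((x \<bullet> y) / (x \<bullet> x)) *\<^sub>R x" for y
  have linP: "linear P"
    by (rule linearI) (simp_all add: P_def inner_add_right algebra_simps add_divide_distrib scaleR_add_left scaleR_right_diff_distrib)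
  define W where "W = {y. x \<bullet> y = 0}"
  have subW: "subspace W" unfolding W_def subspace_def by (simp add: inner_add_right)
  have linbr: "linear (br x)" using bl unfolding bilinear_def by auto
  have linf: "linear (P \<circ> br x)" using linbr linP by (rule linear_compose)
  have Px: "P x = 0" using xx by (simp add: P_def)
  have Pw: "P w = w" if "w \<in> W" for w using that by (simp add: P_def W_def)
  have "\<forall>w\<in>W. \<exists>k. (P \<circ> br x) w = k *\<^sub>R w"
  proof
    fix w assume w: "w \<in> W"
    obtain a b where ab: "br x w = a *\<^sub>R x + b *\<^sub>R w" using cc by blast
    have "P (br x w) = a *\<^sub>R P x + b *\<^sub>R P w"
      using ab linear_add[OF linP] linear_scale[OF linP] by simp
    then show "\<exists>k. (P \<circ> br x) w = k *\<^sub>R w" using Px Pw[OF w] by auto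
  qed
  then obtain c where c: "\<And>w. w \<in> W \<Longrightarrow> P (br x w) = c *\<^sub>R w"
    using eigen_scalar[OF linf subW] by auto
  show ?thesis
  proof (intro exI allI)
    fix y
    have PyW: "P y \<in> W" using xx by (simp add: W_def P_def inner_diff_right)
    have "br x (P y) = br x y - ((x \<bullet> y) / (x \<bullet> x)) *\<^sub>R br x x"
      unfolding P_def using bilinear_rsub[OF bl] bilinear_rmul[OF bl] by simp
    then have "br x (P y) = br x y" using alt by simp
    then have "P (br x y) = c *\<^sub>R P y" using c[OF PyW] by simp
    then have "br x y = c *\<^sub>R y + (((x \<bullet> br x y) / (x \<bullet> x)) - c * ((x \<bullet> y) / (x \<bullet> x))) *\<^sub>R x"
      unfolding P_def by (simp add: algebra_simps)
    then show "br x y = c *\<^sub>R y + (((x \<bullet> br x y) / (x \<bullet> x)) - c * ((x \<bullet> y) / (x \<bullet> x))) *\<^sub>R x" .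
  qed
qed

lemma indep_coeffs:
  fixes x y :: "'a::real_vector"
  assumes "x \<noteq> 0" "\<forall>t. y \<noteq> t *\<^sub>R x" "\<alpha> *\<^sub>R y + \<beta> *\<^sub>R x = 0"
  shows "\<alpha> = 0 \<and> \<beta> = 0"
proof -
  have "\<alpha> = 0"
  proof (rule ccontr)
    assume "\<alpha> \<noteq> 0"
    have "\<alpha> *\<^sub>R y = - \<beta> *\<^sub>R x" using assms(3) by (simp add: eq_neg_iff_add_eq_0)
    then have "(1 / \<alpha>) *\<^sub>R (\<alpha> *\<^sub>R y) = (1 / \<alpha>) *\<^sub>R (- \<beta> *\<^sub>R x)" by simp
    then have "y = (- \<beta> / \<alpha>) *\<^sub>R x" using \<open>\<alpha> \<noteq> 0\<close> by simp
    then show False using assms(2) by blast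
  qed
  then show ?thesis using assms by simp
qed

lemma lie_form:
  fixes br :: "'a::euclidean_space \<Rightarrow> 'a \<Rightarrow> 'a"
  assumes la: "lie_algebra br" and cC: "class_C br"
  shows "\<exists>l. linear l \<and> (\<forall>x y. br x y = l x *\<^sub>R y - l y *\<^sub>R x)"
proof -
  have bl: "bilinear br" and alt: "\<And>x. br x x = 0" using la unfolding lie_algebra_def by blast+
  have cc: "\<forall>x y. \<exists>a b::real. br x y = a *\<^sub>R x + b *\<^sub>R y" using cC unfolding class_C_def by blast
  obtain x0 y0 where nz: "br x0 y0 \<noteq> 0" using cC unfolding class_C_def by blast
  have anti: "br y x = - br x y" for x y
  proof -
    have "br (x + y) (x + y) = 0" by (rule alt)
    moreover have "br (x + y) (x + y) = br x x + br x y + (br y x + br y y)"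
      using bilinear_ladd[OF bl] bilinear_radd[OF bl] by (simp add: algebra_simps)
    ultimately have "br x y + br y x = 0" using alt by simp
    then show ?thesis by (simp add: eq_neg_iff_add_eq_0 add.commute)
  qed
  have brs: "br (t *\<^sub>R x) y = t *\<^sub>R br x y" "br x (t *\<^sub>R y) = t *\<^sub>R br x y" for t x y
    by (rule bilinear_lmul[OF bl], rule bilinear_rmul[OF bl])
  have other: "\<exists>z. z \<noteq> 0 \<and> (\<forall>t. z \<noteq> t *\<^sub>R x)" if "x \<noteq> 0" for x :: 'a
  proof (rule ccontr)
    assume nt: "\<not> ?thesis"
    have "\<exists>t. z = t *\<^sub>R x" for z
    proof (cases "z = 0")
      case True then show ?thesis by (intro exI[of _ 0]) simp
    next
      case False then show ?thesis using nt by blast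
    qed
    then have "\<forall>z. \<exists>t. z = t *\<^sub>R x" by blast
    then obtain a b where "x0 = a *\<^sub>R x" "y0 = b *\<^sub>R x" by blast
    then have "br x0 y0 = (a * b) *\<^sub>R br x x" using brs by simp
    then show False using nz alt by simp
  qed
  define C where "C x = (SOME c. \<forall>y. \<exists>m. br x y = c *\<^sub>R y + m *\<^sub>R x)" for x
  have C: "\<exists>m. br x y = C x *\<^sub>R y + m *\<^sub>R x" if "x \<noteq> 0" for x y
    using someI_ex[OF ad_form[OF la cc that]] unfolding C_def by blast
  have ind: "br x y = C x *\<^sub>R y - C y *\<^sub>R x"
    if hh: "x \<noteq> 0" "y \<noteq> 0" "\<forall>t. y \<noteq> t *\<^sub>R x" for x y :: 'a
  proof -
    obtain m where m: "br x y = C x *\<^sub>R y + m *\<^sub>R x" using C hh by blast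
    obtain m' where m': "br y x = C y *\<^sub>R x + m' *\<^sub>R y" using C hh by blast
    have "br x y + br y x = 0" using anti[of x y] by simp
    then have "(C x *\<^sub>R y + m *\<^sub>R x) + (C y *\<^sub>R x + m' *\<^sub>R y) = 0" using m m' by simp
    then have "(C x + m') *\<^sub>R y + (m + C y) *\<^sub>R x = 0" by (simp add: algebra_simps)
    then have "C x + m' = 0 \<and> m + C y = 0" using indep_coeffs hh by blast
    then have "m = - C y" by linarith
    then show ?thesis using m by simp
  qed
  have form: "br x y = C x *\<^sub>R y - C y *\<^sub>R x" if hh: "x \<noteq> 0" "y \<noteq> 0" for x y :: 'a
  proof (cases "\<forall>t. y \<noteq> t *\<^sub>R x")
    case True then show ?thesis using ind hh by blast
  next
    case False
    then obtain t where t: "y = t *\<^sub>R x" by blast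
    then have t0: "t \<noteq> 0" using hh by auto
    obtain z where z: "z \<noteq> 0" "\<forall>s. z \<noteq> s *\<^sub>R x" using other hh by blast
    have zy: "\<forall>s. z \<noteq> s *\<^sub>R y"
    proof
      fix s show "z \<noteq> s *\<^sub>R y" using z(2)[rule_format, of "s * t"] t by simp
    qed
    have "br y z = t *\<^sub>R br x z" using t brs by simp
    then have "C y *\<^sub>R z - C z *\<^sub>R y = t *\<^sub>R (C x *\<^sub>R z - C z *\<^sub>R x)"
      using ind[OF hh(2) z(1) zy] ind[OF hh(1) z] by simp
    then have "(C y - t * C x) *\<^sub>R z = 0" using t by (simp add: algebra_simps)
    then have "C y = t * C x" using z by simp
    moreover have "br x y = 0" using t brs alt by simp
    ultimately show ?thesis using t by simp
  qed
  define l where "l x = (if x = 0 then 0 else C x)" for x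
  have form2: "br x y = l x *\<^sub>R y - l y *\<^sub>R x" for x y
    using form[of x y] bilinear_lzero[OF bl] bilinear_rzero[OF bl] unfolding l_def by auto
  have "x0 \<noteq> 0" using nz bilinear_lzero[OF bl] by auto
  have "linear l"
  proof (rule linearI)
    fix x1 x2
    have "br (x1 + x2) x0 = br x1 x0 + br x2 x0" by (rule bilinear_ladd[OF bl])
    then have "(l (x1 + x2) - l x1 - l x2) *\<^sub>R x0 = 0" unfolding form2 by (simp add: algebra_simps)
    then show "l (x1 + x2) = l x1 + l x2" using \<open>x0 \<noteq> 0\<close> by simp
  next
    fix c x
    have "br (c *\<^sub>R x) x0 = c *\<^sub>R br x x0" by (rule brs)
    then have "(l (c *\<^sub>R x) - c * l x) *\<^sub>R x0 = 0" unfolding form2 by (simp add: algebra_simps)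
    then show "l (c *\<^sub>R x) = c *\<^sub>R l x" using \<open>x0 \<noteq> 0\<close> by simp
  qed
  then show ?thesis using form2 by blast
qed

lemma riesz:
  fixes g :: "'a::euclidean_space \<Rightarrow> 'a \<Rightarrow> real"
  assumes "pseudo_inner g" "linear l"
  shows "\<exists>a. \<forall>v. g a v = l v"
proof -
  have bl: "bilinear g" and nd: "\<And>u. (\<forall>v. g u v = 0) \<Longrightarrow> u = 0"
    using assms(1) unfolding pseudo_inner_def by auto
  define G where "G u = adjoint (g u) (1::real)" for u
  have lg: "linear (g u)" for u using bl unfolding bilinear_def by auto
  have G: "g u v = v \<bullet> G u" for u v
    using adjoint_works[OF lg, of v u 1] unfolding G_def by simp
  have linG: "linear G"
  proof (rule linearI)
    fix x y show "G (x + y) = G x + G y"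
      by (rule vector_eq_ldot[THEN iffD1]) (metis G bilinear_ladd[OF bl] inner_add_right)
  next
    fix c x show "G (c *\<^sub>R x) = c *\<^sub>R G x"
      by (rule vector_eq_ldot[THEN iffD1]) (metis G bilinear_lmul[OF bl] inner_scaleR_right real_scaleR_def)
  qed
  have "inj G"
  proof (rule injI)
    fix x y assume "G x = G y"
    then have "\<forall>v. g (x - y) v = 0" using G bilinear_lsub[OF bl] by simp
    then show "x = y" using nd by fastforce
  qed
  then have "surj G" using linear_injective_imp_surjective linG by blast
  obtain w where w: "l v = v \<bullet> w" for v
    using adjoint_works[OF assms(2), of _ 1] by (metis mult.right_neutral inner_real_def)
  from \<open>surj G\<close> obtain a where "G a = w" by (metis surjD)
  then show ?thesis using G w by metis
qed

lemma curv_formula: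
  fixes g :: "'a::euclidean_space \<Rightarrow> 'a \<Rightarrow> real"
  assumes bg: "bilinear g" and sym: "\<And>u v. g u v = g v u" and ll: "linear l"
    and ga: "\<And>v. g a v = l v" and lf: "\<And>x y. br x y = l x *\<^sub>R y - l y *\<^sub>R x"
  shows "curvature br (\<lambda>x y. g x y *\<^sub>R a - l y *\<^sub>R x) x y z
           = l a *\<^sub>R (g x z *\<^sub>R y - g y z *\<^sub>R x)"
proof -
  have ga': "g v a = l v" for v using ga sym by metis
  have gr: "g u (p *\<^sub>R v - q *\<^sub>R w) = p * g u v - q * g u w" for u v w p q
    using bilinear_rsub[OF bg] bilinear_rmul[OF bg] by simp
  have gl: "g (p *\<^sub>R v - q *\<^sub>R w) u = p * g v u - q * g w u" for u v w p q
    using bilinear_lsub[OF bg] bilinear_lmul[OF bg] by simp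
  have lr: "l (p *\<^sub>R v - q *\<^sub>R w) = p * l v - q * l w" for v w p q
    using linear_diff[OF ll] linear_scale[OF ll] by simp
  show ?thesis
    unfolding curvature_def lf gr gl lr ga ga'
    by (simp add: algebra_simps sym[of y x] sym[of z x] sym[of z y])
qed

theorem theorem1p4:
  fixes br :: "'a::euclidean_space \<Rightarrow> 'a \<Rightarrow> 'a"
    and g :: "'a \<Rightarrow> 'a \<Rightarrow> real"
  assumes "lie_algebra br"
    and "class_C br"
    and "pseudo_inner g"
  shows "flat g br \<longleftrightarrow> degenerate_on g (derived_ideal br)"
proof -
  obtain l where ll: "linear l" and lf: "\<And>x y. br x y = l x *\<^sub>R y - l y *\<^sub>R x"
    using lie_form[OF assms(1,2)] by blast
  have bg: "bilinear g" and sym: "\<And>u v. g u v = g v u" and nd: "\<And>u. (\<forall>v. g u v = 0) \<Longrightarrow> u = 0"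
    using assms(3) unfolding pseudo_inner_def by blast+
  obtain a where ga: "\<And>v. g a v = l v" using riesz[OF assms(3) ll] by blast
  obtain x0 y0 where nz: "br x0 y0 \<noteq> 0" using assms(2) unfolding class_C_def by blast
  have lbr: "l (br x y) = 0" for x y
    unfolding lf using linear_diff[OF ll] linear_scale[OF ll] by simp
  have "\<exists>x. l x \<noteq> 0"
  proof (rule ccontr)
    assume "\<not> ?thesis" then have "br x0 y0 = 0" unfolding lf by simp
    then show False using nz by simp
  qed
  then obtain x1 where "l x1 \<noteq> 0" by blast
  define e where "e = (1 / l x1) *\<^sub>R x1"
  have le: "l e = 1" unfolding e_def using linear_scale[OF ll] \<open>l x1 \<noteq> 0\<close> by simp
  have DI: "derived_ideal br = {v. l v = 0}"
  proof
    show "derived_ideal br \<subseteq> {v. l v = 0}" unfolding derived_ideal_def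
      by (rule span_minimal) (auto simp: lbr subspace_def linear_0[OF ll] linear_add[OF ll] linear_scale[OF ll])
  next
    show "{v. l v = 0} \<subseteq> derived_ideal br"
    proof
      fix v assume "v \<in> {v. l v = 0}"
      then have "v = br e v" unfolding lf using le by simp
      then show "v \<in> derived_ideal br" unfolding derived_ideal_def by (metis (mono_tags, lifting) mem_Collect_eq span_base)
    qed
  qed
  have gr: "g u (p *\<^sub>R v - q *\<^sub>R w) = p * g u v - q * g u w" for u v w p q
    using bilinear_rsub[OF bg] bilinear_rmul[OF bg] by simp
  have gl: "g (p *\<^sub>R v - q *\<^sub>R w) u = p * g v u - q * g w u" for u v w p q
    using bilinear_lsub[OF bg] bilinear_lmul[OF bg] by simp
  have lr: "l (p *\<^sub>R v - q *\<^sub>R w) = p * l v - q * l w" for v w p q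
    using linear_diff[OF ll] linear_scale[OF ll] by simp
  have a0: "a \<noteq> 0" using ga[of e] le bilinear_lzero[OF bg] by auto
  have degen: "degenerate_on g (derived_ideal br) \<longleftrightarrow> l a = 0"
  proof
    assume "degenerate_on g (derived_ideal br)"
    then obtain u where u: "l u = 0" "u \<noteq> 0" and uv: "\<And>v. l v = 0 \<Longrightarrow> g u v = 0"
      unfolding degenerate_on_def DI by blast
    define k where "k = g u e"
    have guv: "g u v = l v * k" for v
    proof -
      have "l (1 *\<^sub>R v - l v *\<^sub>R e) = 0" unfolding lr using le by simp
      then have "g u (1 *\<^sub>R v - l v *\<^sub>R e) = 0" by (rule uv)
      then show ?thesis unfolding gr k_def by simp
    qed
    have "k \<noteq> 0"
    proof
      assume "k = 0" then have "\<forall>v. g u v = 0" using guv by simp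
      then show False using nd u by blast
    qed
    have "\<forall>v. g (1 *\<^sub>R u - k *\<^sub>R a) v = 0" unfolding gl using guv ga by simp
    then have "1 *\<^sub>R u - k *\<^sub>R a = 0" by (rule nd)
    then have "u = k *\<^sub>R a" by simp
    then have "l u = k * l a" using linear_scale[OF ll] by simp
    then show "l a = 0" using u \<open>k \<noteq> 0\<close> by simp
  next
    assume "l a = 0"
    then show "degenerate_on g (derived_ideal br)"
      unfolding degenerate_on_def DI using a0 ga by auto
  qed
  define nabla0 where "nabla0 = (\<lambda>x y. g x y *\<^sub>R a - l y *\<^sub>R x)"
  have CF: "curvature br nabla0 x y z = l a *\<^sub>R (g x z *\<^sub>R y - g y z *\<^sub>R x)" for x y z
    unfolding nabla0_def by (rule curv_formula[OF bg sym ll ga lf])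
  have flat_iff: "flat g br \<longleftrightarrow> l a = 0"
  proof
    assume "flat g br"
    then obtain nabla where lc: "levi_civita g br nabla" and R0: "\<And>x y z. curvature br nabla x y z = 0"
      unfolding flat_def by blast
    have bn: "bilinear nabla" and tor: "\<And>x y. nabla x y - nabla y x = br x y"
      and met: "\<And>x y z. g (nabla x y) z + g y (nabla x z) = 0"
      using lc unfolding levi_civita_def by blast+
    have T: "g (nabla x y) z - g (nabla y x) z = l x * g y z - l y * g x z" for x y z
    proof -
      have "g (nabla x y) z - g (nabla y x) z = g (nabla x y - nabla y x) z"
        using bilinear_lsub[OF bg] by simp
      also have "\<dots> = l x * g y z - l y * g x z" unfolding tor lf gl ..
      finally show ?thesis .
    qed
    have M: "g (nabla x y) z + g (nabla x z) y = 0" for x y z using met[of x y z] sym by metis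
    have N: "g (nabla x y) z = g x y * l z - l y * g x z" for x y z
      using M[of x y z] M[of z x y] M[of y z x] T[of x z y] T[of z y x] T[of x y z]
        sym[of x y] sym[of x z] sym[of y z]
      by (simp add: algebra_simps)
    have eq: "nabla = nabla0"
    proof (intro ext)
      fix x y
      have "\<forall>z. g (1 *\<^sub>R nabla x y - 1 *\<^sub>R nabla0 x y) z = 0"
        unfolding gl nabla0_def N gl ga by (simp add: sym)
      then have "1 *\<^sub>R nabla x y - 1 *\<^sub>R nabla0 x y = 0" by (rule nd)
      then show "nabla x y = nabla0 x y" by simp
    qed
    show "l a = 0"
    proof (rule ccontr)
      assume qa: "l a \<noteq> 0"
      have "e \<noteq> 0" using le linear_0[OF ll] by auto
      then obtain z where z: "g e z \<noteq> 0" using nd by blast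
      define y where "y = br x0 y0"
      have ly: "l y = 0" unfolding y_def by (rule lbr)
      have "l a *\<^sub>R (g e z *\<^sub>R y - g y z *\<^sub>R e) = 0" using R0[of e y z] CF[of e y z] eq by simp
      then have w0: "g e z *\<^sub>R y - g y z *\<^sub>R e = 0" using qa by simp
      then have "l (g e z *\<^sub>R y - g y z *\<^sub>R e) = 0" using linear_0[OF ll] by simp
      then have "g y z = 0" unfolding lr using ly le by simp
      then have "g e z *\<^sub>R y = 0" using w0 by simp
      then show False using z nz y_def by simp
    qed
  next
    assume q: "l a = 0"
    have "levi_civita g br nabla0"
      unfolding levi_civita_def
    proof (intro conjI allI)
      show "bilinear nabla0" unfolding bilinear_def nabla0_def
      proof (intro conjI allI)
        fix x show "linear (\<lambda>y. g x y *\<^sub>R a - l y *\<^sub>R x)"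
          by (rule linearI) (simp_all add: bilinear_radd[OF bg] bilinear_rmul[OF bg] linear_add[OF ll] linear_scale[OF ll] algebra_simps)
      next
        fix y show "linear (\<lambda>x. g x y *\<^sub>R a - l y *\<^sub>R x)"
          by (rule linearI) (simp_all add: bilinear_ladd[OF bg] bilinear_lmul[OF bg] algebra_simps)
      qed
    next
      fix x y show "nabla0 x y - nabla0 y x = br x y"
        unfolding nabla0_def lf by (simp add: sym[of y x] algebra_simps)
    next
      fix x y z show "g (nabla0 x y) z + g y (nabla0 x z) = 0"
        unfolding nabla0_def gr gl ga using sym[of a y] sym[of y x] ga[of y] sym[of x z] by (simp add: algebra_simps)
    qed
    moreover have "\<forall>x y z. curvature br nabla0 x y z = 0" using CF q by simp
    ultimately show "flat g br" unfolding flat_def by blast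
  qed
  show ?thesis using flat_iff degen by simp
qed
end
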